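(* Let $p\in(-1,\infty)$, $\xi\in\Xi^+$ and $\mathbf M=\mathbf M(\xi)$. Then every support point $\mathbf x_*$ of every $\phi_p$-optimal design satisfies $$\mathbf x_*^\top\mathbf M^{-(p+1)}\mathbf x_*\ge\lambda_{\min}(\mathbf M^{-p}).$$
   Context: Let $\mathcal X\subset\mathbb R^m$ be compact, $\Xi$ the set of probability measures on $\mathcal X$, $\mathbf M(\xi)=\int\mathbf x\mathbf x^\top\xi(d\mathbf x)$, and $\Xi^+$ the (nonempty) set of designs with nonsingular $\mathbf M(\xi)$. For $p\neq0$, $\Phi_p^+(\mathbf M)=[\tfrac1m\operatorname{tr}(\mathbf M^{-p})]^{-1/p}$ for positive definite $\mathbf M$. It is $0$ on singular matrices if $p>0$; for $p\in(-1,0)$ the formula applies to all nonnegative definite $\mathbf M$. Also $\Phi_0^+=(\det)^{1/m}$, and $\phi_p(\xi)=\Phi_p^+[\mathbf M(\xi)]$. A $\phi_p$-optimal design maximizes $\phi_p$ over $\Xi$. Matrix powers are defined spectrally, with $\mathbf M^0=\mathbf I_m$. *)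

theory Defs
  imports "HOL-Analysis.Analysis" "HOL-Probability.Probability"
begin

definition diag_mat :: "real^'m \<Rightarrow> real^'m^'m" where
  "diag_mat d = (\<chi> i j. if i = j then d $ i else 0)"

text \<open>Spectral matrix power of a symmetric matrix:
  if A = U diag(d) U^T with U orthogonal, then A^s = U diag(d_i^s) U^T
  (well defined, independent of the decomposition; only used for
  nonnegative definite A, with positive exponents when A is singular).\<close>
definition mpow :: "real^'m^'m \<Rightarrow> real \<Rightarrow> real^'m^'m" where
  "mpow A s = (SOME B. \<exists>U d. orthogonal_matrix U \<and>
      A = U ** diag_mat d ** transpose U \<and>
      B = U ** diag_mat (\<chi> i. (d $ i) powr s) ** transpose U)"

definition lambda_min :: "real^'m^'m \<Rightarrow> real" where
  "lambda_min A = Inf {c. \<exists>v. v \<noteq> 0 \<and> A *v v = c *\<^sub>R v}"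

definition is_design :: "(real^'m) set \<Rightarrow> (real^'m) measure \<Rightarrow> bool" where
  "is_design X \<xi> \<longleftrightarrow> sets \<xi> = sets borel \<and> prob_space \<xi> \<and> emeasure \<xi> X = 1"

definition info_mat :: "(real^'m) measure \<Rightarrow> real^'m^'m" where
  "info_mat \<xi> = (\<chi> i j. \<integral>x. (x $ i) * (x $ j) \<partial>\<xi>)"

definition Phi_plus :: "real \<Rightarrow> real^'m^'m \<Rightarrow> real" where
  "Phi_plus p M =
     (if p = 0 then det M powr (1 / real CARD('m))
      else if p > 0 \<and> \<not> invertible M then 0
      else ((1 / real CARD('m)) * trace (mpow M (- p))) powr (- 1 / p))"

definition phi :: "real \<Rightarrow> (real^'m) measure \<Rightarrow> real" where
  "phi p \<xi> = Phi_plus p (info_mat \<xi>)"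

definition phi_optimal :: "real \<Rightarrow> (real^'m) set \<Rightarrow> (real^'m) measure \<Rightarrow> bool" where
  "phi_optimal p X \<xi> \<longleftrightarrow> is_design X \<xi> \<and>
     (\<forall>\<zeta>. is_design X \<zeta> \<longrightarrow> phi p \<zeta> \<le> phi p \<xi>)"

definition support_point :: "(real^'m) measure \<Rightarrow> real^'m \<Rightarrow> bool" where
  "support_point \<xi> x \<longleftrightarrow> (\<forall>e>0. emeasure \<xi> (ball x e) > 0)"

end

theory Submission
  imports Defs
begin

definition odiag :: "real^'n^'n \<Rightarrow> real^'n \<Rightarrow> real^'n^'n" where
  "odiag U e = U ** diag_mat e ** transpose U"

lemma odiag_entry: "odiag U e $ i $ k = (\<Sum>j\<in>UNIV. U$i$j * e$j * U$k$j)"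
  unfolding odiag_def diag_mat_def
  by (simp add: matrix_matrix_mult_def transpose_def if_distrib sum.delta' cong: if_cong)

lemma sum_swap3: "(\<Sum>i\<in>A. \<Sum>k\<in>B. \<Sum>j\<in>C. f i k j) = (\<Sum>j\<in>C. \<Sum>i\<in>A. \<Sum>k\<in>B. f i k j)"
proof -
  have "(\<Sum>i\<in>A. \<Sum>k\<in>B. \<Sum>j\<in>C. f i k j) = (\<Sum>i\<in>A. \<Sum>j\<in>C. \<Sum>k\<in>B. f i k j)"
    by (rule sum.cong[OF refl], rule sum.swap)
  also have "\<dots> = (\<Sum>j\<in>C. \<Sum>i\<in>A. \<Sum>k\<in>B. f i k j)" by (rule sum.swap)
  finally show ?thesis .
qed

lemma odiag_quad: "x \<bullet> (odiag U e *v y) = (\<Sum>j\<in>UNIV. e$j * (column j U \<bullet> x) * (column j U \<bullet> y))"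
proof -
  have "x \<bullet> (odiag U e *v y) = (\<Sum>i\<in>UNIV. \<Sum>k\<in>UNIV. \<Sum>j\<in>UNIV. x$i * U$i$j * e$j * U$k$j * y$k)"
    by (simp add: inner_vec_def matrix_vector_mult_def odiag_entry sum_distrib_left sum_distrib_right mult.assoc)
  also have "\<dots> = (\<Sum>j\<in>UNIV. \<Sum>i\<in>UNIV. \<Sum>k\<in>UNIV. x$i * U$i$j * e$j * U$k$j * y$k)"
    by (rule sum_swap3)
  also have "\<dots> = (\<Sum>j\<in>UNIV. e$j * (column j U \<bullet> x) * (column j U \<bullet> y))"
    by (simp add: inner_vec_def column_def sum_distrib_left sum_distrib_right sum_product mult.commute mult.left_commute mult.assoc)
  finally show ?thesis .
qed


lemma odiag_mulv: "odiag U e *v y = (\<Sum>j\<in>UNIV. (e$j * (column j U \<bullet> y)) *\<^sub>R column j U)"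
proof (subst vec_eq_iff, intro allI)
  fix i
  have "(odiag U e *v y) $ i = (\<Sum>k\<in>UNIV. \<Sum>j\<in>UNIV. U$i$j * e$j * U$k$j * y$k)"
    by (simp add: matrix_vector_mult_def odiag_entry sum_distrib_right)
  also have "\<dots> = (\<Sum>j\<in>UNIV. \<Sum>k\<in>UNIV. U$i$j * e$j * U$k$j * y$k)" by (rule sum.swap)
  also have "\<dots> = (\<Sum>j\<in>UNIV. (e$j * (column j U \<bullet> y)) *\<^sub>R column j U) $ i"
    by (simp add: inner_vec_def column_def sum_distrib_left sum_distrib_right mult.commute mult.left_commute mult.assoc)
  finally show "(odiag U e *v y) $ i = (\<Sum>j\<in>UNIV. (e$j * (column j U \<bullet> y)) *\<^sub>R column j U) $ i" .
qed

lemma orth_cols: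
  fixes U :: "real^'n^'n"
  assumes "orthogonal_matrix U"
  shows "column i U \<bullet> column j U = (if i = j then 1 else 0)"
proof -
  have "(transpose U ** U) $ i $ j = mat 1 $ i $ j" using assms by (simp add: orthogonal_matrix_def)
  then show ?thesis
    by (simp add: matrix_matrix_mult_def transpose_def inner_vec_def column_def mat_def inner_real_def)
qed

lemma diag_ones: "diag_mat (\<chi> i. 1) = (mat 1 :: real^'n^'n)"
  by (simp add: diag_mat_def mat_def vec_eq_iff)

lemma odiag_ones: assumes "orthogonal_matrix U" shows "odiag U (\<chi> i. 1) = mat 1"
  using assms by (simp add: odiag_def diag_ones orthogonal_matrix_def)

lemma parseval:
  fixes U :: "real^'n^'n"
  assumes "orthogonal_matrix U"
  shows "x \<bullet> y = (\<Sum>j\<in>UNIV. (column j U \<bullet> x) * (column j U \<bullet> y))"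
  using odiag_quad[of x U "\<chi> i. 1" y] odiag_ones[OF assms] by simp

lemma expand:
  fixes U :: "real^'n^'n"
  assumes "orthogonal_matrix U"
  shows "y = (\<Sum>j\<in>UNIV. (column j U \<bullet> y) *\<^sub>R column j U)"
  using odiag_mulv[of U "\<chi> i. 1" y] odiag_ones[OF assms] by simp

lemma odiag_coeff:
  fixes U :: "real^'n^'n"
  assumes "orthogonal_matrix U"
  shows "column l U \<bullet> (odiag U e *v y) = e$l * (column l U \<bullet> y)"
proof -
  have "column l U \<bullet> (odiag U e *v y) = (\<Sum>j\<in>UNIV. e$j * (column j U \<bullet> column l U) * (column j U \<bullet> y))"
    by (rule odiag_quad)
  also have "\<dots> = (\<Sum>j\<in>UNIV. if j = l then e$l * (column l U \<bullet> y) else 0)"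
    by (rule sum.cong) (auto simp: orth_cols[OF assms])
  finally show ?thesis by simp
qed

lemma odiag_col:
  fixes U :: "real^'n^'n"
  assumes "orthogonal_matrix U"
  shows "odiag U e *v column l U = e$l *\<^sub>R column l U"
proof -
  have "odiag U e *v column l U = (\<Sum>j\<in>UNIV. (e$j * (column j U \<bullet> column l U)) *\<^sub>R column j U)"
    by (rule odiag_mulv)
  also have "\<dots> = (\<Sum>j\<in>UNIV. if j = l then e$l *\<^sub>R column l U else 0)"
    by (rule sum.cong) (auto simp: orth_cols[OF assms])
  finally show ?thesis by simp
qed

lemma col_norm: fixes U :: "real^'n^'n" assumes "orthogonal_matrix U" shows "column l U \<bullet> column l U = 1"
  using orth_cols[OF assms] by simp

lemma col_nz: fixes U :: "real^'n^'n" assumes "orthogonal_matrix U" shows "column l U \<noteq> 0"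
  using col_norm[OF assms, of l] by auto

lemma odiag_eig_coeff:
  assumes "orthogonal_matrix U" "odiag U d *v v = c *\<^sub>R v"
  shows "d$j * (column j U \<bullet> v) = c * (column j U \<bullet> v)"
proof -
  have "column j U \<bullet> (odiag U d *v v) = d$j * (column j U \<bullet> v)" by (rule odiag_coeff[OF assms(1)])
  then show ?thesis using assms(2) by (metis inner_scaleR_right)
qed

lemma odiag_fun_eig:
  assumes "orthogonal_matrix U" "odiag U d *v v = c *\<^sub>R v"
  shows "odiag U (\<chi> i. f (d$i)) *v v = f c *\<^sub>R v"
proof -
  have "odiag U (\<chi> i. f (d$i)) *v v = (\<Sum>j\<in>UNIV. (f (d$j) * (column j U \<bullet> v)) *\<^sub>R column j U)"
    by (simp add: odiag_mulv)
  also have "\<dots> = (\<Sum>j\<in>UNIV. (f c * (column j U \<bullet> v)) *\<^sub>R column j U)"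
  proof (rule sum.cong[OF refl])
    fix j
    have "d$j * (column j U \<bullet> v) = c * (column j U \<bullet> v)" by (rule odiag_eig_coeff[OF assms])
    then have "column j U \<bullet> v = 0 \<or> d$j = c" by (metis mult_right_cancel)
    then show "(f (d$j) * (column j U \<bullet> v)) *\<^sub>R column j U = (f c * (column j U \<bullet> v)) *\<^sub>R column j U"
      by auto
  qed
  also have "\<dots> = f c *\<^sub>R (\<Sum>j\<in>UNIV. (column j U \<bullet> v) *\<^sub>R column j U)"
    by (simp add: scaleR_sum_right)
  also have "\<dots> = f c *\<^sub>R v" using expand[OF assms(1), of v] by simp
  finally show ?thesis .
qed

lemma matrix_eq_on_orth:
  assumes "orthogonal_matrix U" "\<And>j. B *v column j U = C *v column j U"
  shows "B = C"
proof -
  have "B ** U = C ** U"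
    using assms(2) by (simp add: vec_eq_iff matrix_matrix_mult_def matrix_vector_mult_def column_def)
  then have "B ** U ** transpose U = C ** U ** transpose U" by simp
  then show ?thesis using assms(1) by (simp add: orthogonal_matrix_def matrix_mul_assoc[symmetric])
qed

lemma odiag_unique:
  assumes "orthogonal_matrix U" "orthogonal_matrix V" "odiag U d = odiag V e"
  shows "odiag U (\<chi> i. f (d$i)) = odiag V (\<chi> i. f (e$i))"
proof (rule matrix_eq_on_orth[OF assms(2)])
  fix j
  have ev: "odiag U d *v column j V = e$j *\<^sub>R column j V"
    using assms(3) odiag_col[OF assms(2)] by simp
  show "odiag U (\<chi> i. f (d$i)) *v column j V = odiag V (\<chi> i. f (e$i)) *v column j V"
    using odiag_fun_eig[OF assms(1) ev, of f] odiag_col[OF assms(2), of "\<chi> i. f (e$i)" j] by simp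
qed

lemma mpow_odiag:
  assumes "orthogonal_matrix U" "A = odiag U d"
  shows "mpow A s = odiag U (\<chi> i. (d$i) powr s)"
proof -
  let ?P = "\<lambda>B. \<exists>U d. orthogonal_matrix U \<and> A = U ** diag_mat d ** transpose U \<and>
      B = U ** diag_mat (\<chi> i. (d $ i) powr s) ** transpose U"
  have "?P (odiag U (\<chi> i. (d$i) powr s))" using assms unfolding odiag_def by blast
  then have "?P (mpow A s)" unfolding mpow_def by (rule someI)
  then obtain V e where V: "orthogonal_matrix V" "A = odiag V e" "mpow A s = odiag V (\<chi> i. (e$i) powr s)"
    unfolding odiag_def by blast
  show ?thesis using odiag_unique[OF V(1) assms(1), of e d "\<lambda>t. t powr s"] V assms by simp
qed


lemma sym_inner:
  fixes A :: "real^'n^'n"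
  assumes "transpose A = A"
  shows "x \<bullet> (A *v y) = (A *v x) \<bullet> y"
proof -
  have "x \<bullet> (A *v y) = (x v* A) \<bullet> y" by (simp add: dot_lmul_matrix)
  also have "x v* A = transpose A *v x" by simp
  finally show ?thesis using assms by simp
qed

lemma cont_quad: "continuous_on S (\<lambda>x::real^'n. x \<bullet> (A *v x))"
  by (intro continuous_intros continuous_on_id linear_continuous_on matrix_vector_mul_bounded_linear)

lemma eig_exists:
  fixes A :: "real^'n^'n"
  assumes sym: "transpose A = A" and sub: "subspace V" and inv: "\<And>x. x \<in> V \<Longrightarrow> A *v x \<in> V"
    and nz: "x0 \<in> V" "x0 \<noteq> 0"
  shows "\<exists>v\<in>V. v \<bullet> v = 1 \<and> (\<exists>c. A *v v = c *\<^sub>R v)"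
proof -
  define K where "K = sphere 0 1 \<inter> V"
  have "compact K" unfolding K_def by (intro compact_Int_closed compact_sphere closed_subspace sub)
  have "x0 /\<^sub>R norm x0 \<in> K" using nz sub unfolding K_def by (auto simp: subspace_scale)
  then have "K \<noteq> {}" by auto
  obtain v where vK: "v \<in> K" and vmax: "\<And>y. y \<in> K \<Longrightarrow> y \<bullet> (A *v y) \<le> v \<bullet> (A *v v)"
    using continuous_attains_sup[OF \<open>compact K\<close> \<open>K \<noteq> {}\<close> cont_quad] by blast
  define lam where "lam = v \<bullet> (A *v v)"
  have vV: "v \<in> V" and vn: "v \<bullet> v = 1" using vK unfolding K_def by (auto simp: dot_square_norm)
  have bound: "y \<bullet> (A *v y) \<le> lam * (y \<bullet> y)" if "y \<in> V" for y
  proof (cases "y = 0")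
    case True then show ?thesis by simp
  next
    case False
    have "y /\<^sub>R norm y \<in> K" using False that sub unfolding K_def by (auto simp: subspace_scale)
    then have "(y /\<^sub>R norm y) \<bullet> (A *v (y /\<^sub>R norm y)) \<le> lam" using vmax lam_def by blast
    then have "(y \<bullet> (A *v y)) / (norm y)^2 \<le> lam"
      by (simp add: matrix_vector_mult_scaleR power2_eq_square divide_inverse mult.commute mult.left_commute)
    then show ?thesis using False by (simp add: dot_square_norm field_simps)
  qed
  define w where "w = A *v v - lam *\<^sub>R v"
  have wV: "w \<in> V" unfolding w_def using sub inv vV by (simp add: subspace_diff subspace_scale)
  have wv: "w \<bullet> v = 0" unfolding w_def using vn lam_def by (simp add: inner_diff_left inner_commute[of "A *v v" v])
  define g where "g = w \<bullet> (A *v v)"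
  have "w \<bullet> w = w \<bullet> (A *v v - lam *\<^sub>R v)" by (subst (2) w_def) (rule refl)
  then have gw: "g = w \<bullet> w" unfolding g_def using wv by (simp add: inner_diff_right inner_commute[of w v])
  define c where "c = lam * (w \<bullet> w) - w \<bullet> (A *v w)"
  have key: "2 * t * g \<le> t^2 * c" for t
  proof -
    have "(v + t *\<^sub>R w) \<in> V" using sub vV wV by (simp add: subspace_add subspace_scale)
    then have b: "(v + t *\<^sub>R w) \<bullet> (A *v (v + t *\<^sub>R w)) \<le> lam * ((v + t *\<^sub>R w) \<bullet> (v + t *\<^sub>R w))"
      by (rule bound)
    have e1: "v \<bullet> (A *v w) = g" unfolding g_def using sym_inner[OF sym, of v w] by (simp add: inner_commute)
    have "(v + t *\<^sub>R w) \<bullet> (A *v (v + t *\<^sub>R w)) = lam + 2 * t * g + t^2 * (w \<bullet> (A *v w))"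
      using e1 by (simp add: matrix_vector_right_distrib matrix_vector_mult_scaleR inner_add_left inner_add_right
          lam_def g_def power2_eq_square algebra_simps)
    moreover have "(v + t *\<^sub>R w) \<bullet> (v + t *\<^sub>R w) = 1 + t^2 * (w \<bullet> w)"
      using vn wv by (simp add: inner_add_left inner_add_right inner_commute power2_eq_square)
    ultimately show ?thesis using b unfolding c_def by (simp add: algebra_simps)
  qed
  have "g = 0"
  proof (rule ccontr)
    assume "g \<noteq> 0"
    define t where "t = g / (\<bar>c\<bar> + 1)"
    have pos: "\<bar>c\<bar> + 1 > 0" by simp
    have "2 * t * g \<le> t^2 * c" by (rule key)
    then have "(2 * t * g) * (\<bar>c\<bar> + 1)^2 \<le> (t^2 * c) * (\<bar>c\<bar> + 1)^2"
      by (simp add: mult_right_mono)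
    moreover have "(2 * t * g) * (\<bar>c\<bar> + 1)^2 = 2 * g * g * (\<bar>c\<bar> + 1)"
      using pos unfolding t_def by (simp add: power2_eq_square)
    moreover have "(t^2 * c) * (\<bar>c\<bar> + 1)^2 = g * g * c"
      using pos unfolding t_def by (simp add: power2_eq_square)
    ultimately have "2 * g * g * (\<bar>c\<bar> + 1) \<le> g * g * c" by simp
    moreover have "g * g > 0" using \<open>g \<noteq> 0\<close> by (metis not_real_square_gt_zero)
    ultimately have "2 * (\<bar>c\<bar> + 1) \<le> c"
      by (metis mult.assoc mult.commute mult_le_cancel_left_pos)
    then show False by simp
  qed
  then have "w = 0" using gw by simp
  then have "A *v v = lam *\<^sub>R v" unfolding w_def by simp
  then show ?thesis using vV vn by blast
qed


definition oe :: "real^'n^'n \<Rightarrow> (real^'n) set \<Rightarrow> bool" where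
  "oe A B \<longleftrightarrow> (\<forall>b\<in>B. b \<bullet> b = 1 \<and> (\<exists>c. A *v b = c *\<^sub>R b)) \<and> pairwise orthogonal B"

lemma oe_card:
  fixes A :: "real^'n^'n"
  assumes "oe A B" shows "finite B \<and> card B \<le> CARD('n)"
proof -
  have "0 \<notin> B" using assms unfolding oe_def by force
  then have "independent B" using assms pairwise_orthogonal_independent unfolding oe_def by blast
  from independent_bound[OF this] show ?thesis by simp
qed

theorem spectral:
  fixes A :: "real^'n^'n"
  assumes sym: "transpose A = A"
  shows "\<exists>U d. orthogonal_matrix U \<and> A = odiag U d"
proof -
  have "oe A {}" by (simp add: oe_def)
  moreover have "\<forall>B. oe A B \<longrightarrow> card B < CARD('n) + 1" using oe_card by fastforce
  ultimately obtain B where B: "oe A B" and Bmax: "\<And>B'. oe A B' \<Longrightarrow> card B' \<le> card B"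
    using ex_has_greatest_nat[of "oe A" "{}" card "CARD('n) + 1"] by blast
  have finB: "finite B" using oe_card[OF B] by simp
  have cardB: "card B = CARD('n)"
  proof (rule ccontr)
    assume "card B \<noteq> CARD('n)"
    then have lt: "card B < CARD('n)" using oe_card[OF B] by simp
    have "dim B \<le> card B" by (rule dim_le_card[OF span_superset finB])
    then have dl: "dim B < DIM(real^'n)" using lt by simp
    obtain x where x: "x \<noteq> 0" "\<And>y. y \<in> span B \<Longrightarrow> orthogonal x y"
      using orthogonal_to_subspace_exists[OF dl] by blast
    define V where "V = {x. \<forall>b\<in>B. b \<bullet> x = 0}"
    have subV: "subspace V" unfolding V_def subspace_def by (simp add: inner_add_right)
    have invV: "A *v y \<in> V" if "y \<in> V" for y
    proof -
      have "b \<bullet> (A *v y) = 0" if "b \<in> B" for b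
      proof -
        obtain c where "A *v b = c *\<^sub>R b" using B \<open>b \<in> B\<close> unfolding oe_def by blast
        then have "b \<bullet> (A *v y) = c * (b \<bullet> y)" using sym_inner[OF sym, of b y] by simp
        then show ?thesis using \<open>y \<in> V\<close> \<open>b \<in> B\<close> unfolding V_def by simp
      qed
      then show ?thesis unfolding V_def by simp
    qed
    have xV: "x \<in> V" unfolding V_def using x(2) span_base by (force simp: orthogonal_def inner_commute)
    obtain v where v: "v \<in> V" "v \<bullet> v = 1" "\<exists>c. A *v v = c *\<^sub>R v"
      using eig_exists[OF sym subV invV xV x(1)] by blast
    have vB: "v \<notin> B" using v unfolding V_def by force
    have "oe A (insert v B)"
      using B v unfolding oe_def V_def
      by (auto simp: pairwise_insert orthogonal_def inner_commute)
    then have "card (insert v B) \<le> card B" by (rule Bmax)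
    then show False using vB finB by simp
  qed
  obtain g where g: "bij_betw g (UNIV :: 'n set) B"
    using finite_same_card_bij[of "UNIV :: 'n set" B] finB cardB by auto
  define U :: "real^'n^'n" where "U = (\<chi> i j. (g j) $ i)"
  have colU: "column j U = g j" for j unfolding U_def by (simp add: column_def vec_eq_iff)
  have gB: "g j \<in> B" for j using g by (auto simp: bij_betw_def)
  have ginj: "g i = g j \<Longrightarrow> i = j" for i j using g by (auto simp: bij_betw_def inj_on_def)
  have "transpose U ** U = mat 1"
  proof -
    have "(transpose U ** U) $ i $ j = mat 1 $ i $ j" for i j
    proof -
      have "(transpose U ** U) $ i $ j = g i \<bullet> g j"
        unfolding U_def by (simp add: matrix_matrix_mult_def transpose_def inner_vec_def)
      also have "\<dots> = (if i = j then 1 else 0)"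
        using B gB ginj unfolding oe_def pairwise_def orthogonal_def by metis
      finally show ?thesis by (simp add: mat_def)
    qed
    then show ?thesis by (simp add: vec_eq_iff)
  qed
  then have orth: "orthogonal_matrix U" by (simp add: orthogonal_matrix)
  define d :: "real^'n" where "d = (\<chi> j. SOME c. A *v g j = c *\<^sub>R g j)"
  have eig: "A *v column j U = d$j *\<^sub>R column j U" for j
  proof -
    have "\<exists>c. A *v g j = c *\<^sub>R g j" using B gB unfolding oe_def by blast
    then have "A *v g j = (SOME c. A *v g j = c *\<^sub>R g j) *\<^sub>R g j" by (rule someI_ex)
    then show ?thesis by (simp add: d_def colU)
  qed
  have "A = odiag U d"
    by (rule matrix_eq_on_orth[OF orth]) (simp add: eig odiag_col[OF orth])
  then show ?thesis using orth by blast
qed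


lemma trace_odiag:
  fixes U :: "real^'n^'n"
  assumes "orthogonal_matrix U" shows "trace (odiag U e) = sum (\<lambda>j. e$j) UNIV"
proof -
  have "trace (odiag U e) = (\<Sum>i\<in>UNIV. \<Sum>j\<in>UNIV. U$i$j * e$j * U$i$j)"
    by (simp add: trace_def odiag_entry)
  also have "\<dots> = (\<Sum>j\<in>UNIV. \<Sum>i\<in>UNIV. U$i$j * e$j * U$i$j)" by (rule sum.swap)
  also have "\<dots> = (\<Sum>j\<in>UNIV. e$j * (column j U \<bullet> column j U))"
    by (simp add: inner_vec_def column_def sum_distrib_left mult.commute mult.left_commute)
  finally show ?thesis using col_norm[OF assms] by simp
qed

lemma det_odiag:
  fixes U :: "real^'n^'n"
  assumes "orthogonal_matrix U" shows "det (odiag U e) = prod (\<lambda>j. e$j) UNIV"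
proof -
  have "det U * det U = 1" using det_orthogonal_matrix[OF assms] by auto
  moreover have "det (diag_mat e) = prod (\<lambda>j. e$j) UNIV"
    by (subst det_diagonal) (auto simp: diag_mat_def)
  ultimately show ?thesis by (simp add: odiag_def det_mul)
qed

lemma odiag_eigval:
  fixes U :: "real^'n^'n"
  assumes "orthogonal_matrix U" shows "column j U \<bullet> (odiag U e *v column j U) = e$j"
  using odiag_coeff[OF assms] col_norm[OF assms] by simp

lemma odiag_scale:
  fixes U :: "real^'n^'n"
  shows "c *\<^sub>R odiag U e = odiag U (c *\<^sub>R e)"
  by (simp add: vec_eq_iff odiag_entry sum_distrib_left mult.commute mult.left_commute)

lemma invertible_eig_nz:
  fixes U :: "real^'n^'n"
  assumes "orthogonal_matrix U" "invertible (odiag U e)" shows "e$j \<noteq> 0"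
proof
  assume "e$j = 0"
  then have "odiag U e *v column j U = 0" using odiag_col[OF assms(1)] by simp
  moreover obtain B where "B ** odiag U e = mat 1" using assms(2) unfolding invertible_def by blast
  ultimately have "column j U = 0" by (metis matrix_vector_mul_assoc matrix_vector_mul_lid matrix_vector_mult_0_right)
  then show False using col_nz[OF assms(1)] by simp
qed

lemma odiag_invertible:
  fixes U :: "real^'n^'n"
  assumes "orthogonal_matrix U" "\<And>j. e$j \<noteq> 0" shows "invertible (odiag U e)"
proof -
  let ?f = "\<chi> j. inverse (e$j)"
  have "odiag U e ** odiag U ?f = mat 1"
    by (rule matrix_eq_on_orth[OF assms(1)])
       (simp add: matrix_vector_mul_assoc[symmetric] odiag_col[OF assms(1)] matrix_vector_mult_scaleR assms(2))
  moreover have "odiag U ?f ** odiag U e = mat 1"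
    by (rule matrix_eq_on_orth[OF assms(1)])
       (simp add: matrix_vector_mul_assoc[symmetric] odiag_col[OF assms(1)] matrix_vector_mult_scaleR assms(2))
  ultimately show ?thesis unfolding invertible_def by blast
qed

lemma odiag_sym: "transpose (odiag U e) = odiag U e"
  by (simp add: vec_eq_iff odiag_entry transpose_def mult.commute mult.left_commute)

lemma Phi_odiag:
  fixes U :: "real^'n^'n"
  assumes "orthogonal_matrix U"
  shows "Phi_plus p (odiag U a) =
     (if p = 0 then (prod (\<lambda>j. a$j) UNIV) powr (1 / real CARD('n))
      else if p > 0 \<and> \<not> invertible (odiag U a) then 0
      else ((1 / real CARD('n)) * sum (\<lambda>j. a$j powr (-p)) UNIV) powr (- 1 / p))"
  unfolding Phi_plus_def
  using mpow_odiag[OF assms refl, of a "-p"] trace_odiag[OF assms] det_odiag[OF assms]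
  by simp


lemma powr_concave0:
  assumes "0 < q" "q \<le> 1"
  shows "concave_on {0..} (\<lambda>x::real. x powr q)"
proof -
  have c1: "concave_on {0<..} (\<lambda>x::real. x powr q)"
  proof (rule f''_le0_imp_concave[where f' = "\<lambda>x. q * x powr (q - 1)" and f'' = "\<lambda>x. q * ((q - 1) * x powr (q - 1 - 1))"])
    show "convex {0::real<..}" by simp
    fix x :: real assume "x \<in> {0<..}"
    then have x: "x > 0" by simp
    show "((\<lambda>x. x powr q) has_real_derivative q * x powr (q - 1)) (at x)"
      by (rule has_real_derivative_powr[OF x])
    show "((\<lambda>x. q * x powr (q - 1)) has_real_derivative q * ((q - 1) * x powr (q - 1 - 1))) (at x)"
      by (rule DERIV_cmult, rule has_real_derivative_powr[OF x])
    show "q * ((q - 1) * x powr (q - 1 - 1)) \<le> 0"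
    proof -
      have "(q - 1) * x powr (q - 1 - 1) \<le> 0" by (rule mult_nonpos_nonneg) (use assms in auto)
      then show ?thesis by (rule mult_nonneg_nonpos[rotated]) (use assms in auto)
    qed
  qed
  have pt: "u * x powr q + v * y powr q \<le> (u * x + v * y) powr q"
    if "x \<ge> 0" "y \<ge> 0" "u \<ge> 0" "v \<ge> 0" "u + v = 1" for x y u v :: real
  proof (cases "x > 0 \<and> y > 0")
    case True
    have "u = 1 - v" using that by simp
    then show ?thesis using concave_onD[OF c1, of v x y] that True by (simp only: scaleR_conv_of_real of_real_def[symmetric]) (simp add: \<open>u = 1 - v\<close>)
  next
    case False
    have key: "t * z powr q \<le> (t * z) powr q" if "z \<ge> 0" "t \<ge> 0" "t \<le> 1" for z t :: real
    proof -
      have "t = t powr 1 \<or> t = 0" using that by auto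
      then have "t \<le> t powr q" using powr_mono'[of q 1 t] that assms by auto
      then have "t * z powr q \<le> t powr q * z powr q" by (simp add: mult_right_mono)
      then show ?thesis using that by (simp add: powr_mult)
    qed
    show ?thesis
    proof (cases "x = 0")
      case True
      then show ?thesis using key[of y v] that by simp
    next
      case False
      then have "y = 0" using \<open>\<not> (x > 0 \<and> y > 0)\<close> that by auto
      then show ?thesis using key[of x u] that by simp
    qed
  qed
  show ?thesis unfolding concave_on_iff
    using pt by (auto simp: convex_real_interval)
qed

lemma powr_convex_neg:
  assumes "p > 0"
  shows "convex_on {0<..} (\<lambda>x::real. x powr (-p))"
proof (rule f''_ge0_imp_convex[where f' = "\<lambda>x. (-p) * x powr (-p - 1)" and f'' = "\<lambda>x. (-p) * ((-p - 1) * x powr (-p - 1 - 1))"])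
  show "convex {0::real<..}" by simp
  fix x :: real assume "x \<in> {0<..}"
  then have x: "x > 0" by simp
  show "((\<lambda>x. x powr (-p)) has_real_derivative (-p) * x powr (-p - 1)) (at x)"
    by (rule has_real_derivative_powr[OF x])
  show "((\<lambda>x. (-p) * x powr (-p - 1)) has_real_derivative (-p) * ((-p - 1) * x powr (-p - 1 - 1))) (at x)"
    by (rule DERIV_cmult, rule has_real_derivative_powr[OF x])
  have h: "(-p) * (-p - 1) \<ge> 0" by (rule mult_nonpos_nonpos) (use assms in auto)
  have "0 \<le> ((-p) * (-p - 1)) * x powr (-p - 1 - 1)" by (rule mult_nonneg_nonneg[OF h]) simp
  then show "0 \<le> (-p) * ((-p - 1) * x powr (-p - 1 - 1))"
    by (simp only: mult.assoc)
qed


lemma Phi_nonneg: "Phi_plus p M \<ge> 0"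
  unfolding Phi_plus_def by simp

lemma sum_pos_weights:
  fixes P :: "'n::finite \<Rightarrow> real"
  assumes "(\<Sum>i\<in>UNIV. P i) = 1" "\<And>i. P i \<ge> 0" "\<And>i. a i > 0"
  shows "(\<Sum>i\<in>UNIV. P i * a i) > 0"
proof -
  obtain i where "P i \<noteq> 0" using assms(1) by (metis sum.neutral zero_neq_one)
  then have "P i > 0" using assms(2)[of i] by simp
  have 1: "0 < P i * a i" using \<open>P i > 0\<close> assms(3)[of i] by simp
  have 2: "\<And>k. 0 \<le> P k * a k" using assms(2,3) by (simp add: less_imp_le)
  show ?thesis by (rule sum_pos2[of UNIV i]) (use 1 2 in auto)
qed

lemma Phi_mono:
  fixes A B :: "real^'n^'n"
  assumes symA: "transpose A = A" and symB: "transpose B = B"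
    and nnd: "\<And>x. 0 \<le> x \<bullet> (A *v x)" and le: "\<And>x. x \<bullet> (A *v x) \<le> x \<bullet> (B *v x)" and p: "p \<ge> -1"
  shows "Phi_plus p A \<le> Phi_plus p B"
proof -
  obtain U a where U: "orthogonal_matrix U" and Aeq: "A = odiag U a" using spectral[OF symA] by blast
  obtain V b where V: "orthogonal_matrix V" and Beq: "B = odiag V b" using spectral[OF symB] by blast
  define P where "P i j = (column j V \<bullet> column i U)^2" for i j
  have Pnn: "P i j \<ge> 0" for i j unfolding P_def by simp
  have a_eq: "a$i = column i U \<bullet> (A *v column i U)" for i using odiag_eigval[OF U] Aeq by simp
  have b_eq: "b$j = column j V \<bullet> (B *v column j V)" for j using odiag_eigval[OF V] Beq by simp
  have a_nn: "a$i \<ge> 0" for i using a_eq nnd by simp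
  have F2: "(\<Sum>i\<in>UNIV. P i j * a$i) \<le> b$j" for j
  proof -
    have "column j V \<bullet> (A *v column j V) = (\<Sum>i\<in>UNIV. a$i * (column i U \<bullet> column j V) * (column i U \<bullet> column j V))"
      unfolding Aeq by (rule odiag_quad)
    also have "\<dots> = (\<Sum>i\<in>UNIV. P i j * a$i)"
      unfolding P_def by (simp add: power2_eq_square inner_commute mult.commute mult.left_commute)
    finally show ?thesis using le[of "column j V"] b_eq by simp
  qed
  have F1: "a$i \<le> (\<Sum>j\<in>UNIV. P i j * b$j)" for i
  proof -
    have "column i U \<bullet> (B *v column i U) = (\<Sum>j\<in>UNIV. b$j * (column j V \<bullet> column i U) * (column j V \<bullet> column i U))"
      unfolding Beq by (rule odiag_quad)
    also have "\<dots> = (\<Sum>j\<in>UNIV. P i j * b$j)"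
      unfolding P_def by (simp add: power2_eq_square mult.commute mult.left_commute)
    finally show ?thesis using le[of "column i U"] a_eq by simp
  qed
  have R: "(\<Sum>j\<in>UNIV. P i j) = 1" for i
    using parseval[OF V, of "column i U" "column i U"] col_norm[OF U, of i]
    unfolding P_def by (simp add: power2_eq_square)
  have Cs: "(\<Sum>i\<in>UNIV. P i j) = 1" for j
    using parseval[OF U, of "column j V" "column j V"] col_norm[OF V, of j]
    unfolding P_def by (simp add: power2_eq_square inner_commute)
  have swapP: "(\<Sum>j\<in>UNIV. \<Sum>i\<in>UNIV. P i j * h i) = (\<Sum>i\<in>UNIV. h i)" for h :: "'n \<Rightarrow> real"
  proof -
    have "(\<Sum>j\<in>UNIV. \<Sum>i\<in>UNIV. P i j * h i) = (\<Sum>i\<in>UNIV. \<Sum>j\<in>UNIV. P i j * h i)" by (rule sum.swap)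
    also have "\<dots> = (\<Sum>i\<in>UNIV. (\<Sum>j\<in>UNIV. P i j) * h i)" by (simp add: sum_distrib_right)
    finally show ?thesis using R by simp
  qed
  have mix_nn: "(\<Sum>i\<in>UNIV. P i j * a$i) \<ge> 0" for j by (intro sum_nonneg mult_nonneg_nonneg Pnn a_nn)
  have b_nn: "b$j \<ge> 0" for j using mix_nn[of j] F2[of j] by linarith
  have mpos: "real CARD('n) > 0" by simp
  show ?thesis
  proof (cases "p = 0")
    case True
    show ?thesis
    proof (cases "\<exists>i. a$i = 0")
      case True
      then have "prod (\<lambda>j. a$j) UNIV = 0" by (simp add: prod_zero_iff)
      then have "Phi_plus p A = 0" unfolding Aeq Phi_odiag[OF U] using \<open>p = 0\<close> by simp
      then show ?thesis using Phi_nonneg by simp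
    next
      case False
      then have apos: "a$i > 0" for i using a_nn[of i] by (metis le_neq_trans)
      have mixpos: "(\<Sum>i\<in>UNIV. P i j * a$i) > 0" for j
        by (rule sum_pos_weights[OF Cs Pnn apos])
      have bpos: "b$j > 0" for j using mixpos[of j] F2[of j] by linarith
      have "ln (b$j) \<ge> (\<Sum>i\<in>UNIV. P i j * ln (a$i))" for j
      proof -
        have "(\<Sum>i\<in>UNIV. P i j * ln (a$i)) \<le> ln (\<Sum>i\<in>UNIV. P i j *\<^sub>R a$i)"
          by (rule concave_on_sum[OF _ _ ln_concave]) (auto simp: Cs Pnn apos)
        also have "\<dots> \<le> ln (b$j)" using F2[of j] mixpos[of j] by simp
        finally show ?thesis .
      qed
      then have "(\<Sum>j\<in>UNIV. ln (b$j)) \<ge> (\<Sum>j\<in>UNIV. \<Sum>i\<in>UNIV. P i j * ln (a$i))" by (rule sum_mono)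
      then have "(\<Sum>j\<in>UNIV. ln (b$j)) \<ge> (\<Sum>i\<in>UNIV. ln (a$i))" using swapP by simp
      then have "ln (prod (\<lambda>j. b$j) UNIV) \<ge> ln (prod (\<lambda>j. a$j) UNIV)"
        using apos bpos by (simp add: ln_prod less_imp_neq[symmetric])
      then have "prod (\<lambda>j. a$j) UNIV \<le> prod (\<lambda>j. b$j) UNIV"
        using apos bpos by (simp add: prod_pos)
      then show ?thesis unfolding Aeq Beq Phi_odiag[OF U] Phi_odiag[OF V] using \<open>p = 0\<close>
        by (simp add: powr_mono2 prod_nonneg a_nn)
    qed
  next
    case pnz: False
    show ?thesis
    proof (cases "p > 0")
      case True
      show ?thesis
      proof (cases "invertible A")
        case False
        then have "Phi_plus p A = 0" unfolding Phi_plus_def using True by simp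
        then show ?thesis using Phi_nonneg by simp
      next
        case inv: True
        have apos: "a$i > 0" for i using invertible_eig_nz[OF U, of a i] inv Aeq a_nn[of i] by auto
        have mixpos: "(\<Sum>i\<in>UNIV. P i j * a$i) > 0" for j
          by (rule sum_pos_weights[OF Cs Pnn apos])
        have bpos: "b$j > 0" for j using mixpos[of j] F2[of j] by linarith
        have bnz: "\<And>j. b$j \<noteq> 0" using bpos by (metis less_irrefl)
        have invB: "invertible B" unfolding Beq by (rule odiag_invertible[OF V bnz])
        have "b$j powr (-p) \<le> (\<Sum>i\<in>UNIV. P i j * (a$i powr (-p)))" for j
        proof -
          have "b$j powr (-p) \<le> (\<Sum>i\<in>UNIV. P i j * a$i) powr (-p)"
            by (rule powr_mono2') (use True mixpos F2 in auto)
          also have "\<dots> \<le> (\<Sum>i\<in>UNIV. P i j * (a$i powr (-p)))"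
            using convex_on_sum[OF _ _ powr_convex_neg[OF True], of UNIV "\<lambda>i. P i j" "\<lambda>i. a$i"]
            by (auto simp: Cs Pnn apos)
          finally show ?thesis .
        qed
        then have "(\<Sum>j\<in>UNIV. b$j powr (-p)) \<le> (\<Sum>j\<in>UNIV. \<Sum>i\<in>UNIV. P i j * (a$i powr (-p)))"
          by (rule sum_mono)
        then have SS: "(\<Sum>j\<in>UNIV. b$j powr (-p)) \<le> (\<Sum>i\<in>UNIV. a$i powr (-p))" using swapP by simp
        have SBpos: "(\<Sum>j\<in>UNIV. b$j powr (-p)) > 0"
          by (rule sum_pos) (use bnz in simp_all)
        have "((1 / real CARD('n)) * (\<Sum>i\<in>UNIV. a$i powr (-p))) powr (-1/p)
            \<le> ((1 / real CARD('n)) * (\<Sum>j\<in>UNIV. b$j powr (-p))) powr (-1/p)"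
          by (rule powr_mono2') (use True SS SBpos mpos in \<open>auto intro: divide_right_mono\<close>)
        then show ?thesis unfolding Aeq Beq Phi_odiag[OF U] Phi_odiag[OF V] using pnz True inv invB Aeq Beq
          by simp
      qed
    next
      case False
      then have pneg: "p < 0" using pnz by simp
      define q where "q = -p"
      have q: "0 < q" "q \<le> 1" using pneg p unfolding q_def by auto
      have "b$j powr q \<ge> (\<Sum>i\<in>UNIV. P i j * (a$i powr q))" for j
      proof -
        have "(\<Sum>i\<in>UNIV. P i j * (a$i powr q)) \<le> (\<Sum>i\<in>UNIV. P i j *\<^sub>R a$i) powr q"
          by (rule concave_on_sum[OF _ _ powr_concave0[OF q]]) (auto simp: Cs Pnn a_nn)
        also have "\<dots> \<le> b$j powr q"
          using F2[of j] mix_nn[of j] q by (simp add: powr_mono2)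
        finally show ?thesis .
      qed
      then have "(\<Sum>j\<in>UNIV. b$j powr q) \<ge> (\<Sum>j\<in>UNIV. \<Sum>i\<in>UNIV. P i j * (a$i powr q))"
        by (rule sum_mono)
      then have SS: "(\<Sum>j\<in>UNIV. b$j powr q) \<ge> (\<Sum>i\<in>UNIV. a$i powr q)" using swapP by simp
      have "((1 / real CARD('n)) * (\<Sum>i\<in>UNIV. a$i powr q)) powr (-1/p)
          \<le> ((1 / real CARD('n)) * (\<Sum>j\<in>UNIV. b$j powr q)) powr (-1/p)"
        by (rule powr_mono2) (use pneg SS mpos in \<open>auto intro!: divide_right_mono divide_nonneg_pos sum_nonneg\<close>)
      then show ?thesis unfolding Aeq Beq Phi_odiag[OF U] Phi_odiag[OF V] q_def using pnz pneg
        by simp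
    qed
  qed
qed


lemma odiag_inv_iff:
  fixes U :: "real^'n^'n"
  assumes "orthogonal_matrix U" shows "invertible (odiag U e) \<longleftrightarrow> (\<forall>j. e$j \<noteq> 0)"
  using invertible_eig_nz[OF assms] odiag_invertible[OF assms] by blast

lemma Phi_scale:
  fixes U :: "real^'n^'n"
  assumes U: "orthogonal_matrix U" and a_nn: "\<And>j. a$j \<ge> 0" and c: "c > 0"
  shows "Phi_plus p (c *\<^sub>R odiag U a) = c * Phi_plus p (odiag U a)"
proof -
  have sc: "c *\<^sub>R odiag U a = odiag U (c *\<^sub>R a)" by (rule odiag_scale)
  have mpos: "real CARD('n) > 0" by simp
  show ?thesis
  proof (cases "p = 0")
    case True
    have "prod (\<lambda>j. (c *\<^sub>R a)$j) UNIV = c ^ CARD('n) * prod (\<lambda>j. a$j) UNIV"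
      by (simp add: prod.distrib)
    moreover have "(c ^ CARD('n)) powr (1 / real CARD('n)) = c"
      using c mpos by (simp add: powr_realpow[symmetric] powr_powr)
    ultimately show ?thesis unfolding sc Phi_odiag[OF U] using True c a_nn
      by (simp add: powr_mult prod_nonneg)
  next
    case False
    have inv: "invertible (odiag U (c *\<^sub>R a)) \<longleftrightarrow> invertible (odiag U a)"
      using c by (simp add: odiag_inv_iff[OF U])
    have S: "(\<Sum>j\<in>UNIV. (c *\<^sub>R a)$j powr (-p)) = c powr (-p) * (\<Sum>j\<in>UNIV. a$j powr (-p))"
      by (simp add: powr_mult sum_distrib_left)
    have "((1 / real CARD('n)) * (c powr (-p) * (\<Sum>j\<in>UNIV. a$j powr (-p)))) powr (-1/p)
        = (c powr (-p)) powr (-1/p) * ((1 / real CARD('n)) * (\<Sum>j\<in>UNIV. a$j powr (-p))) powr (-1/p)"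
    proof -
      have "((1 / real CARD('n)) * (c powr (-p) * (\<Sum>j\<in>UNIV. a$j powr (-p))))
          = c powr (-p) * ((1 / real CARD('n)) * (\<Sum>j\<in>UNIV. a$j powr (-p)))" by (simp add: algebra_simps)
      then show ?thesis by (simp only: powr_mult)
    qed
    also have "(c powr (-p)) powr (-1/p) = c" using False c by (simp add: powr_powr)
    finally have E: "((1 / real CARD('n)) * (c powr (-p) * (\<Sum>j\<in>UNIV. a$j powr (-p)))) powr (-1/p)
        = c * ((1 / real CARD('n)) * (\<Sum>j\<in>UNIV. a$j powr (-p))) powr (-1/p)" .
    show ?thesis unfolding sc Phi_odiag[OF U] using False inv S E by simp
  qed
qed

lemma Phi_pos:
  fixes U :: "real^'n^'n"
  assumes U: "orthogonal_matrix U" and a_pos: "\<And>j. a$j > 0"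
  shows "Phi_plus p (odiag U a) > 0"
proof -
  have nz: "\<And>j. a$j \<noteq> 0" using a_pos by (metis less_irrefl)
  have inv: "invertible (odiag U a)" using odiag_invertible[OF U nz] .
  have "prod (\<lambda>j. a$j) UNIV > 0" using a_pos by (simp add: prod_pos)
  moreover have "(\<Sum>j\<in>UNIV. a$j powr (-p)) > 0" by (rule sum_pos) (use nz in simp_all)
  ultimately show ?thesis unfolding Phi_odiag[OF U] using inv nz by auto
qed


lemma design_basic:
  fixes \<nu> :: "(real^'n) measure"
  assumes "is_design X \<nu>" "compact X"
  shows "prob_space \<nu>" "sets \<nu> = sets borel" "space \<nu> = UNIV" "X \<in> sets \<nu>" "AE x in \<nu>. x \<in> X"
proof -
  show P: "prob_space \<nu>" and S: "sets \<nu> = sets borel" using assms unfolding is_design_def by auto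
  show sp: "space \<nu> = UNIV" using sets_eq_imp_space_eq[OF S] by simp
  have "closed X" using assms(2) by (rule compact_imp_closed)
  then show XS: "X \<in> sets \<nu>" using S by simp
  have "emeasure \<nu> X = 1" using assms unfolding is_design_def by auto
  then have "measure \<nu> X = 1" by (simp add: measure_def)
  then show "AE x in \<nu>. x \<in> X" using prob_space.AE_in_set_eq_1[OF P XS] by simp
qed

lemma meas_cont:
  fixes \<nu> :: "(real^'n) measure" and f :: "real^'n \<Rightarrow> real"
  assumes "sets \<nu> = sets borel" "continuous_on UNIV f"
  shows "f \<in> borel_measurable \<nu>"
  by (subst measurable_cong_sets[OF assms(1) refl]) (rule borel_measurable_continuous_onI[OF assms(2)])

lemma design_integrable:
  fixes \<nu> :: "(real^'n) measure" and f :: "real^'n \<Rightarrow> real"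
  assumes "is_design X \<nu>" "compact X" "continuous_on UNIV f"
  shows "integrable \<nu> f"
proof -
  note D = design_basic[OF assms(1,2)]
  have "compact (f ` X)" by (rule compact_continuous_image[OF continuous_on_subset[OF assms(3)] assms(2)]) simp
  then obtain B where B: "\<And>y. y \<in> f ` X \<Longrightarrow> norm y \<le> B"
    using compact_imp_bounded bounded_iff by metis
  interpret prob_space \<nu> by (rule D(1))
  show ?thesis
  proof (rule integrable_const_bound[where B = B])
    show "AE x in \<nu>. norm (f x) \<le> B" using D(5) by eventually_elim (use B in auto)
    show "f \<in> borel_measurable \<nu>" by (rule meas_cont[OF D(2) assms(3)])
  qed
qed

lemma info_mat_sym: "transpose (info_mat \<nu>) = info_mat \<nu>"
  by (simp add: vec_eq_iff info_mat_def transpose_def mult.commute)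

lemma info_quad:
  fixes \<nu> :: "(real^'n) measure"
  assumes "is_design X \<nu>" "compact X"
  shows "u \<bullet> (info_mat \<nu> *v u) = (\<integral>x. (u \<bullet> x)^2 \<partial>\<nu>)"
proof -
  have int: "integrable \<nu> (\<lambda>x. u$i * u$j * (x$i * x$j))" for i j
    by (rule design_integrable[OF assms]) (intro continuous_intros)
  have cm: "(\<integral>x. u$i * u$j * (x$i * x$j) \<partial>\<nu>) = u$i * u$j * (\<integral>x. x$i * x$j \<partial>\<nu>)" for i j
    by (rule integral_mult_right_zero)
  have "u \<bullet> (info_mat \<nu> *v u) = (\<Sum>i\<in>UNIV. \<Sum>j\<in>UNIV. u$i * u$j * (\<integral>x. x$i * x$j \<partial>\<nu>))"
    by (simp add: inner_vec_def matrix_vector_mult_def info_mat_def sum_distrib_left ac_simps)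
  also have "\<dots> = (\<Sum>i\<in>UNIV. \<Sum>j\<in>UNIV. \<integral>x. u$i * u$j * (x$i * x$j) \<partial>\<nu>)"
    by (simp only: cm)
  also have "\<dots> = (\<integral>x. (\<Sum>i\<in>UNIV. \<Sum>j\<in>UNIV. u$i * u$j * (x$i * x$j)) \<partial>\<nu>)"
    using int by (simp add: integral_sum integrable_sum)
  also have "\<dots> = (\<integral>x. (u \<bullet> x)^2 \<partial>\<nu>)"
    by (simp add: inner_vec_def power2_eq_square sum_product mult.commute mult.left_commute)
  finally show ?thesis .
qed

lemma info_nnd:
  fixes \<nu> :: "(real^'n) measure"
  assumes "is_design X \<nu>" "compact X"
  shows "0 \<le> u \<bullet> (info_mat \<nu> *v u)"
  unfolding info_quad[OF assms] by simp


definition mixd :: "(real^'n) measure \<Rightarrow> (real^'n) measure \<Rightarrow> (real^'n) set \<Rightarrow> (real^'n) measure" where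
  "mixd M N S = distr (M \<Otimes>\<^sub>M N) borel (\<lambda>p. if fst p \<in> S then snd p else fst p)"

context
  fixes X :: "(real^'n) set" and M N :: "(real^'n) measure" and S :: "(real^'n) set"
  assumes dM: "is_design X M" and dN: "is_design X N" and cX: "compact X" and oS: "open S"
begin

lemma mix_meas: "(\<lambda>p. if fst p \<in> S then snd p else fst p) \<in> measurable (M \<Otimes>\<^sub>M N) borel"
proof -
  have sM: "sets M = sets borel" and sN: "sets N = sets borel"
    using design_basic[OF dM cX] design_basic[OF dN cX] by auto
  have e: "measurable (M \<Otimes>\<^sub>M N) borel = measurable (borel \<Otimes>\<^sub>M borel) (borel :: (real^'n) measure)"
    by (rule measurable_cong_sets) (simp_all add: sets_pair_measure_cong[OF sM sN])
  have "(\<lambda>p. if p \<in> S \<times> UNIV then snd p else fst p) \<in> measurable (borel \<Otimes>\<^sub>M borel) (borel :: (real^'n) measure)"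
    by (rule measurable_If_set) (auto simp: oS)
  then show ?thesis unfolding e by (simp add: mem_Times_iff)
qed

lemma mix_design: "is_design X (mixd M N S)"
proof -
  note DM = design_basic[OF dM cX] and DN = design_basic[OF dN cX]
  interpret A: prob_space M by (rule DM(1))
  interpret B: prob_space N by (rule DN(1))
  interpret P: pair_prob_space M N by unfold_locales
  have pd: "prob_space (mixd M N S)" unfolding mixd_def by (rule P.prob_space_distr[OF mix_meas])
  interpret Q: prob_space "mixd M N S" by (rule pd)
  have sets: "sets (mixd M N S) = sets borel" unfolding mixd_def by simp
  have Xb: "X \<in> sets borel" using DM(2,4) by simp
  have "AE p in M \<Otimes>\<^sub>M N. (if fst p \<in> S then snd p else fst p) \<in> X"
  proof (rule P.AE_pair_measure)
    show "{x \<in> space (M \<Otimes>\<^sub>M N). (if fst x \<in> S then snd x else fst x) \<in> X} \<in> sets (M \<Otimes>\<^sub>M N)"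
      using measurable_sets[OF mix_meas Xb] by (simp add: vimage_def Int_def conj_commute)
    show "AE x in M. AE y in N. (if fst (x, y) \<in> S then snd (x, y) else fst (x, y)) \<in> X"
      using DM(5) by eventually_elim (use DN(5) in auto)
  qed
  then have "AE z in mixd M N S. z \<in> X" unfolding mixd_def
    by (subst AE_distr_iff[OF mix_meas]) (use Xb in auto)
  then have "measure (mixd M N S) X = 1"
    using prob_space.AE_in_set_eq_1[OF pd] Xb sets by simp
  then have "emeasure (mixd M N S) X = 1"
    using Q.emeasure_eq_measure by simp
  then show ?thesis unfolding is_design_def using pd sets by simp
qed

lemma mix_nn:
  assumes g: "g \<in> borel_measurable (borel :: (real^'n) measure)"
  shows "(\<integral>\<^sup>+ z. g z \<partial>mixd M N S) = (\<integral>\<^sup>+ x. g x * indicator (- S) x \<partial>M) + emeasure M S * (\<integral>\<^sup>+ y. g y \<partial>N)"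
proof -
  note DM = design_basic[OF dM cX] and DN = design_basic[OF dN cX]
  interpret A: prob_space M by (rule DM(1))
  interpret B: prob_space N by (rule DN(1))
  interpret P: pair_prob_space M N by unfold_locales
  have gM: "g \<in> borel_measurable M" by (subst measurable_cong_sets[OF DM(2) refl]) (rule g)
  have gN: "g \<in> borel_measurable N" by (subst measurable_cong_sets[OF DN(2) refl]) (rule g)
  have SM: "S \<in> sets M" using DM(2) oS by simp
  have gc: "(\<lambda>p. g (if fst p \<in> S then snd p else fst p)) \<in> borel_measurable (M \<Otimes>\<^sub>M N)"
    by (rule measurable_compose[OF mix_meas g])
  have "(\<integral>\<^sup>+ z. g z \<partial>mixd M N S) = (\<integral>\<^sup>+ p. g (if fst p \<in> S then snd p else fst p) \<partial>(M \<Otimes>\<^sub>M N))"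
    unfolding mixd_def by (rule nn_integral_distr[OF mix_meas]) (use g in simp)
  also have "\<dots> = (\<integral>\<^sup>+ x. \<integral>\<^sup>+ y. g (if x \<in> S then y else x) \<partial>N \<partial>M)"
    by (subst B.nn_integral_fst[OF gc, symmetric]) (intro nn_integral_cong, simp)
  also have "\<dots> = (\<integral>\<^sup>+ x. (\<integral>\<^sup>+ y. g y \<partial>N) * indicator S x + g x * indicator (- S) x \<partial>M)"
  proof (rule nn_integral_cong)
    fix x
    show "(\<integral>\<^sup>+ y. g (if x \<in> S then y else x) \<partial>N) = (\<integral>\<^sup>+ y. g y \<partial>N) * indicator S x + g x * indicator (- S) x"
      by (cases "x \<in> S") (simp_all add: B.emeasure_space_1)
  qed
  also have "\<dots> = (\<integral>\<^sup>+ x. (\<integral>\<^sup>+ y. g y \<partial>N) * indicator S x \<partial>M) + (\<integral>\<^sup>+ x. g x * indicator (- S) x \<partial>M)"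
    by (rule nn_integral_add) (use gM SM in auto)
  also have "(\<integral>\<^sup>+ x. (\<integral>\<^sup>+ y. g y \<partial>N) * indicator S x \<partial>M) = (\<integral>\<^sup>+ y. g y \<partial>N) * emeasure M S"
    by (rule nn_integral_cmult_indicator[OF SM])
  finally show ?thesis by (simp add: ac_simps)
qed

end


lemma cs_odiag:
  fixes U :: "real^'n^'n"
  assumes U: "orthogonal_matrix U" and d: "\<And>j. d$j > 0"
  shows "(u \<bullet> x)^2 \<le> (x \<bullet> (odiag U (\<chi> j. 1 / d$j) *v x)) * (u \<bullet> (odiag U d *v u))"
proof -
  define b where "b j = column j U \<bullet> u" for j
  define c where "c j = column j U \<bullet> x" for j
  define \<alpha> :: "real^'n" where "\<alpha> = (\<chi> j. c j / sqrt (d$j))"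
  define \<beta> :: "real^'n" where "\<beta> = (\<chi> j. b j * sqrt (d$j))"
  have sq: "sqrt (d$j) * sqrt (d$j) = d$j" for j using d[of j] by simp
  have sqnz: "sqrt (d$j) \<noteq> 0" for j using d[of j] by simp
  have "u \<bullet> x = (\<Sum>j\<in>UNIV. b j * c j)" unfolding b_def c_def by (rule parseval[OF U])
  also have "\<dots> = \<alpha> \<bullet> \<beta>" unfolding \<alpha>_def \<beta>_def inner_vec_def using sqnz
    by (intro sum.cong) (auto simp: field_simps)
  finally have e1: "u \<bullet> x = \<alpha> \<bullet> \<beta>" .
  have "x \<bullet> (odiag U (\<chi> j. 1 / d$j) *v x) = (\<Sum>j\<in>UNIV. (1 / d$j) * c j * c j)"
    unfolding c_def by (simp add: odiag_quad)
  also have "\<dots> = \<alpha> \<bullet> \<alpha>" unfolding \<alpha>_def inner_vec_def using d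
    by (intro sum.cong) (auto simp: field_simps power2_eq_square less_imp_le)
  finally have e2: "x \<bullet> (odiag U (\<chi> j. 1 / d$j) *v x) = \<alpha> \<bullet> \<alpha>" .
  have "u \<bullet> (odiag U d *v u) = (\<Sum>j\<in>UNIV. d$j * b j * b j)"
    unfolding b_def by (simp add: odiag_quad)
  also have "\<dots> = \<beta> \<bullet> \<beta>" unfolding \<beta>_def inner_vec_def using d
    by (intro sum.cong) (auto simp: field_simps power2_eq_square less_imp_le)
  finally have e3: "u \<bullet> (odiag U d *v u) = \<beta> \<bullet> \<beta>" .
  show ?thesis unfolding e1 e2 e3 by (rule Cauchy_Schwarz_ineq)
qed

lemma lower_odiag:
  fixes U :: "real^'n^'n"
  assumes U: "orthogonal_matrix U" and k: "\<And>j. \<kappa> \<le> d$j"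
  shows "\<kappa> * (u \<bullet> u) \<le> u \<bullet> (odiag U d *v u)"
proof -
  have "\<kappa> * (u \<bullet> u) = (\<Sum>j\<in>UNIV. \<kappa> * ((column j U \<bullet> u) * (column j U \<bullet> u)))"
    using parseval[OF U, of u u] by (simp add: sum_distrib_left)
  also have "\<dots> \<le> (\<Sum>j\<in>UNIV. d$j * (column j U \<bullet> u) * (column j U \<bullet> u))"
    by (intro sum_mono) (simp add: mult.assoc mult_right_mono k)
  also have "\<dots> = u \<bullet> (odiag U d *v u)" by (simp add: odiag_quad)
  finally show ?thesis .
qed

lemma lambda_min_le:
  fixes U :: "real^'n^'n"
  assumes U: "orthogonal_matrix U" and k: "\<And>j. e$k \<le> e$j"
  shows "lambda_min (odiag U e) \<le> e$k"
proof -
  let ?E = "{c. \<exists>v. v \<noteq> 0 \<and> odiag U e *v v = c *\<^sub>R v}"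
  have mem: "e$k \<in> ?E" using odiag_col[OF U, of e k] col_nz[OF U, of k] by blast
  have "e$k \<le> c" if "c \<in> ?E" for c
  proof -
    obtain v where v: "v \<noteq> 0" "odiag U e *v v = c *\<^sub>R v" using \<open>c \<in> ?E\<close> by blast
    have "\<exists>j. column j U \<bullet> v \<noteq> 0"
    proof (rule ccontr)
      assume "\<not> ?thesis"
      then have "v = 0" using expand[OF U, of v] by simp
      then show False using v by simp
    qed
    then obtain j where j: "column j U \<bullet> v \<noteq> 0" by blast
    have "e$j * (column j U \<bullet> v) = c * (column j U \<bullet> v)" by (rule odiag_eig_coeff[OF U v(2)])
    then have "e$j = c" using j by simp
    then show ?thesis using k[of j] by simp
  qed
  then have "bdd_below ?E" by (rule bdd_belowI)
  then show ?thesis unfolding lambda_min_def by (rule cInf_lower[OF mem])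
qed

lemma mix_real:
  fixes X :: "(real^'n) set" and M N :: "(real^'n) measure" and h :: "real^'n \<Rightarrow> real"
  assumes dM: "is_design X M" and dN: "is_design X N" and cX: "compact X" and oS: "open S"
    and hc: "continuous_on UNIV h" and hnn: "\<And>x. h x \<ge> 0"
  shows "(\<integral>z. h z \<partial>mixd M N S) = (\<integral>x. indicator (- S) x * h x \<partial>M) + measure M S * (\<integral>y. h y \<partial>N)"
proof -
  note DM = design_basic[OF dM cX]
  interpret A: prob_space M by (rule DM(1))
  have dMix: "is_design X (mixd M N S)" by (rule mix_design[OF dM dN cX oS])
  have intMix: "integrable (mixd M N S) h" by (rule design_integrable[OF dMix cX hc])
  have intN: "integrable N h" by (rule design_integrable[OF dN cX hc])
  have intM: "integrable M h" by (rule design_integrable[OF dM cX hc])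
  have SM: "- S \<in> sets M" using DM(2) oS by simp
  have intM2: "integrable M (\<lambda>x. indicator (- S) x * h x)"
    using integrable_mult_indicator[OF SM intM] by simp
  have hb: "h \<in> borel_measurable borel" by (rule borel_measurable_continuous_onI[OF hc])
  have gb: "(\<lambda>z. ennreal (h z)) \<in> borel_measurable borel" using hb by measurable
  have "ennreal (\<integral>z. h z \<partial>mixd M N S) = (\<integral>\<^sup>+ z. ennreal (h z) \<partial>mixd M N S)"
    by (rule nn_integral_eq_integral[symmetric]) (use intMix hnn in auto)
  also have "\<dots> = (\<integral>\<^sup>+ x. ennreal (h x) * indicator (- S) x \<partial>M) + emeasure M S * (\<integral>\<^sup>+ y. ennreal (h y) \<partial>N)"
    by (rule mix_nn[OF dM dN cX oS gb])
  also have "(\<integral>\<^sup>+ x. ennreal (h x) * indicator (- S) x \<partial>M) = (\<integral>\<^sup>+ x. ennreal (indicator (- S) x * h x) \<partial>M)"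
    by (intro nn_integral_cong) (simp split: split_indicator)
  also have "\<dots> = ennreal (\<integral>x. indicator (- S) x * h x \<partial>M)"
    by (rule nn_integral_eq_integral) (use intM2 hnn in auto)
  also have "(\<integral>\<^sup>+ y. ennreal (h y) \<partial>N) = ennreal (\<integral>y. h y \<partial>N)"
    by (rule nn_integral_eq_integral) (use intN hnn in auto)
  also have "emeasure M S = ennreal (measure M S)" by (rule A.emeasure_eq_measure)
  finally have E: "ennreal (\<integral>z. h z \<partial>mixd M N S)
      = ennreal (\<integral>x. indicator (- S) x * h x \<partial>M) + ennreal (measure M S) * ennreal (\<integral>y. h y \<partial>N)" .
  have n1: "(\<integral>x. indicator (- S) x * h x \<partial>M) \<ge> 0" by (rule integral_nonneg_AE) (simp add: hnn)
  have n2: "(\<integral>y. h y \<partial>N) \<ge> 0" by (rule integral_nonneg_AE) (simp add: hnn)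
  have n0: "(\<integral>z. h z \<partial>mixd M N S) \<ge> 0" by (rule integral_nonneg_AE) (simp add: hnn)
  have "ennreal (\<integral>z. h z \<partial>mixd M N S) = ennreal ((\<integral>x. indicator (- S) x * h x \<partial>M) + measure M S * (\<integral>y. h y \<partial>N))"
    unfolding E using n1 n2 by (simp add: ennreal_mult ennreal_plus)
  then show ?thesis using n0 n1 n2 by (subst (asm) ennreal_inj) (auto intro!: add_nonneg_nonneg mult_nonneg_nonneg)
qed


lemma transpose_scaleR': "transpose (c *\<^sub>R (A :: real^'n^'n)) = c *\<^sub>R transpose A"
  by (simp add: vec_eq_iff transpose_def)

lemma smat_mulv: "(c *\<^sub>R (A :: real^'n^'n)) *v x = c *\<^sub>R (A *v x)"
  by (simp add: vec_eq_iff matrix_vector_mult_def sum_distrib_left mult.assoc)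

lemma key_support:
  fixes X :: "(real^'m) set" and p :: real
    and \<xi> \<xi>opt :: "(real^'m) measure" and xs :: "real^'m" and U :: "real^'m^'m"
  assumes cX: "compact X" and p: "p > -1"
    and d\<xi>: "is_design X \<xi>"
    and opt: "phi_optimal p X \<xi>opt"
    and sp: "support_point \<xi>opt xs"
    and U: "orthogonal_matrix U" and Meq: "info_mat \<xi> = odiag U d" and dpos: "\<And>j. d$j > 0"
  shows "xs \<bullet> (odiag U (\<chi> j. 1 / d$j) *v xs) \<ge> 1"
proof (rule ccontr)
  define N where "N = odiag U (\<chi> j. 1 / d$j)"
  define \<phi> where "\<phi> x = x \<bullet> (N *v x)" for x
  assume "\<not> xs \<bullet> (odiag U (\<chi> j. 1 / d$j) *v xs) \<ge> 1"
  then have r0: "\<phi> xs < 1" unfolding \<phi>_def N_def by simp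
  define r where "r = (1 + \<phi> xs) / 2"
  have r1: "r < 1" "\<phi> xs < r" using r0 unfolding r_def by auto
  have "open {x. \<phi> x < r}" unfolding \<phi>_def
    by (intro open_Collect_less continuous_intros continuous_on_id linear_continuous_on matrix_vector_mul_bounded_linear)
  then obtain e where e: "e > 0" "ball xs e \<subseteq> {x. \<phi> x < r}"
    using r1(2) open_contains_ball by blast
  define S where "S = ball xs e"
  have oS: "open S" unfolding S_def by simp
  have dopt: "is_design X \<xi>opt" using opt unfolding phi_optimal_def by simp
  note DO = design_basic[OF dopt cX]
  interpret O: prob_space \<xi>opt by (rule DO(1))
  define w where "w = measure \<xi>opt S"
  have "emeasure \<xi>opt S > 0" using sp e(1) unfolding support_point_def S_def by simp
  then have wpos: "w > 0" unfolding w_def using O.emeasure_eq_measure by simp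
  define \<xi>' where "\<xi>' = mixd \<xi>opt \<xi> S"
  have d': "is_design X \<xi>'" unfolding \<xi>'_def by (rule mix_design[OF dopt d\<xi> cX oS])
  have SO: "S \<in> sets \<xi>opt" using DO(2) oS by simp
  obtain B where B: "\<And>x. x \<in> X \<Longrightarrow> norm x \<le> B" using compact_imp_bounded[OF cX] bounded_iff by metis
  define R2 where "R2 = B^2"
  define \<kappa> where "\<kappa> = Min (range (\<lambda>j. d$j))"
  have \<kappa>pos: "\<kappa> > 0" unfolding \<kappa>_def using dpos by (subst Min_gr_iff) auto
  have \<kappa>le: "\<kappa> \<le> d$j" for j unfolding \<kappa>_def by (rule Min_le) auto
  define \<delta> where "\<delta> = (1 - r) * w * \<kappa> / (R2 + 1)"
  have R2nn: "R2 \<ge> 0" unfolding R2_def by simp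
  have \<delta>pos: "\<delta> > 0" unfolding \<delta>_def using r1 wpos \<kappa>pos R2nn by (intro divide_pos_pos mult_pos_pos) auto
  have quad: "(1 + \<delta>) * (u \<bullet> (info_mat \<xi>opt *v u)) \<le> u \<bullet> (info_mat \<xi>' *v u)" for u
  proof -
    define h where "h x = (u \<bullet> x)^2" for x
    have hc: "continuous_on UNIV h" unfolding h_def by (intro continuous_intros)
    have hnn: "h x \<ge> 0" for x unfolding h_def by simp
    define Q where "Q = u \<bullet> (info_mat \<xi> *v u)"
    have intO: "integrable \<xi>opt h" by (rule design_integrable[OF dopt cX hc])
    have Qs: "u \<bullet> (info_mat \<xi>opt *v u) = (\<integral>x. h x \<partial>\<xi>opt)" unfolding h_def by (rule info_quad[OF dopt cX])
    have Q': "u \<bullet> (info_mat \<xi>' *v u) = (\<integral>x. indicator (- S) x * h x \<partial>\<xi>opt) + w * Q"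
    proof -
      have "u \<bullet> (info_mat \<xi>' *v u) = (\<integral>x. h x \<partial>\<xi>')" unfolding h_def by (rule info_quad[OF d' cX])
      also have "\<dots> = (\<integral>x. indicator (- S) x * h x \<partial>\<xi>opt) + w * (\<integral>x. h x \<partial>\<xi>)"
        unfolding \<xi>'_def w_def by (rule mix_real[OF dopt d\<xi> cX oS hc hnn])
      also have "(\<integral>x. h x \<partial>\<xi>) = Q" unfolding Q_def h_def by (rule info_quad[OF d\<xi> cX, symmetric])
      finally show ?thesis .
    qed
    have split: "(\<integral>x. h x \<partial>\<xi>opt) = (\<integral>x. indicator (- S) x * h x \<partial>\<xi>opt) + (\<integral>x. indicator S x * h x \<partial>\<xi>opt)"
    proof -
      have i1: "integrable \<xi>opt (\<lambda>x. indicator (- S) x * h x)"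
        using integrable_mult_indicator[OF _ intO, of "- S"] DO(2) oS by simp
      have i2: "integrable \<xi>opt (\<lambda>x. indicator S x * h x)"
        using integrable_mult_indicator[OF SO intO] by simp
      have "(\<integral>x. h x \<partial>\<xi>opt) = (\<integral>x. indicator (- S) x * h x + indicator S x * h x \<partial>\<xi>opt)"
        by (rule Bochner_Integration.integral_cong) (auto split: split_indicator)
      also have "\<dots> = (\<integral>x. indicator (- S) x * h x \<partial>\<xi>opt) + (\<integral>x. indicator S x * h x \<partial>\<xi>opt)"
        by (rule Bochner_Integration.integral_add[OF i1 i2])
      finally show ?thesis .
    qed
    have Qnn: "Q \<ge> 0" unfolding Q_def by (rule info_nnd[OF d\<xi> cX])
    have pt: "indicator S x * h x \<le> indicator S x * (r * Q)" for x
    proof (cases "x \<in> S")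
      case True
      then have "\<phi> x < r" using e(2) unfolding S_def by auto
      have "h x \<le> \<phi> x * Q"
        unfolding h_def \<phi>_def N_def Q_def Meq by (rule cs_odiag[OF U dpos])
      also have "\<dots> \<le> r * Q" using \<open>\<phi> x < r\<close> Qnn by (simp add: mult_right_mono)
      finally show ?thesis using True by simp
    qed simp
    have inS: "(\<integral>x. indicator S x * h x \<partial>\<xi>opt) \<le> r * Q * w"
    proof -
      have "(\<integral>x. indicator S x * h x \<partial>\<xi>opt) \<le> (\<integral>x. indicator S x * (r * Q) \<partial>\<xi>opt)"
      proof (rule Bochner_Integration.integral_mono)
        show "integrable \<xi>opt (\<lambda>x. indicator S x * h x)" using integrable_mult_indicator[OF SO intO] by simp
        have "integrable \<xi>opt (\<lambda>x. indicator S x *\<^sub>R (r * Q))"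
          by (rule integrable_mult_indicator[OF SO]) simp
        then show "integrable \<xi>opt (\<lambda>x. indicator S x * (r * Q))" by simp
      qed (rule pt)
      also have "\<dots> = r * Q * w" unfolding w_def using SO by (simp add: mult.commute)
      finally show ?thesis .
    qed
    have Qlow: "\<kappa> * (u \<bullet> u) \<le> Q" unfolding Q_def Meq by (rule lower_odiag[OF U \<kappa>le])
    have Qsup: "(\<integral>x. h x \<partial>\<xi>opt) \<le> R2 * (u \<bullet> u)"
    proof -
      have "(\<integral>x. h x \<partial>\<xi>opt) \<le> (\<integral>x. R2 * (u \<bullet> u) \<partial>\<xi>opt)"
      proof (rule integral_mono_AE)
        show "AE x in \<xi>opt. h x \<le> R2 * (u \<bullet> u)"
          using DO(5)
        proof eventually_elim
          fix x assume "x \<in> X"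
          have "h x \<le> (u \<bullet> u) * (x \<bullet> x)" unfolding h_def by (rule Cauchy_Schwarz_ineq)
          also have "x \<bullet> x \<le> R2" unfolding R2_def using B[OF \<open>x \<in> X\<close>]
            by (simp add: dot_square_norm power_mono)
          then have "(u \<bullet> u) * (x \<bullet> x) \<le> (u \<bullet> u) * R2" by (simp add: mult_left_mono)
          finally show "h x \<le> R2 * (u \<bullet> u)" by (simp add: mult.commute)
        qed
      qed (use intO in simp_all)
      also have "\<dots> = R2 * (u \<bullet> u)" by (simp add: O.prob_space)
      finally show ?thesis .
    qed
    have uu: "u \<bullet> u \<ge> 0" by simp
    have "(1 + \<delta>) * (\<integral>x. h x \<partial>\<xi>opt) = (\<integral>x. h x \<partial>\<xi>opt) + \<delta> * (\<integral>x. h x \<partial>\<xi>opt)" by (simp add: algebra_simps)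
    also have "\<delta> * (\<integral>x. h x \<partial>\<xi>opt) \<le> \<delta> * ((R2 + 1) * (u \<bullet> u))"
    proof (rule mult_left_mono)
      have "(R2 + 1) * (u \<bullet> u) = R2 * (u \<bullet> u) + u \<bullet> u" by (simp add: algebra_simps)
      then show "(\<integral>x. h x \<partial>\<xi>opt) \<le> (R2 + 1) * (u \<bullet> u)" using Qsup uu by linarith
    qed (use \<delta>pos in simp)
    also have "\<delta> * ((R2 + 1) * (u \<bullet> u)) = (1 - r) * w * (\<kappa> * (u \<bullet> u))"
      unfolding \<delta>_def using R2nn by (simp add: field_simps)
    also have "\<dots> \<le> (1 - r) * w * Q"
      using Qlow r1 wpos by (intro mult_left_mono) auto
    finally have "(1 + \<delta>) * (\<integral>x. h x \<partial>\<xi>opt) \<le> (\<integral>x. h x \<partial>\<xi>opt) + (1 - r) * w * Q" by simp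
    also have "\<dots> \<le> u \<bullet> (info_mat \<xi>' *v u)"
      unfolding Q' using split inS by (simp add: algebra_simps)
    finally show ?thesis unfolding Qs .
  qed
  obtain V a where V: "orthogonal_matrix V" and Oeq: "info_mat \<xi>opt = odiag V a"
    using spectral[OF info_mat_sym] by blast
  have a_nn: "a$j \<ge> 0" for j
    using odiag_eigval[OF V, where e=a and j=j] info_nnd[OF dopt cX, of "column j V"] Oeq by simp
  have "Phi_plus p ((1 + \<delta>) *\<^sub>R info_mat \<xi>opt) \<le> Phi_plus p (info_mat \<xi>')"
  proof (rule Phi_mono)
    show "transpose ((1 + \<delta>) *\<^sub>R info_mat \<xi>opt) = (1 + \<delta>) *\<^sub>R info_mat \<xi>opt"
      by (simp add: transpose_scaleR' info_mat_sym)
    show "transpose (info_mat \<xi>') = info_mat \<xi>'" by (rule info_mat_sym)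
    show "0 \<le> x \<bullet> ((1 + \<delta>) *\<^sub>R info_mat \<xi>opt *v x)" for x
      using info_nnd[OF dopt cX, of x] \<delta>pos by (simp add: smat_mulv)
    show "x \<bullet> ((1 + \<delta>) *\<^sub>R info_mat \<xi>opt *v x) \<le> x \<bullet> (info_mat \<xi>' *v x)" for x
      using quad[of x] by (simp add: smat_mulv)
    show "-1 \<le> p" using p by simp
  qed
  moreover have "Phi_plus p ((1 + \<delta>) *\<^sub>R info_mat \<xi>opt) = (1 + \<delta>) * Phi_plus p (info_mat \<xi>opt)"
    unfolding Oeq by (rule Phi_scale[OF V a_nn]) (use \<delta>pos in simp)
  moreover have "Phi_plus p (info_mat \<xi>') \<le> Phi_plus p (info_mat \<xi>opt)"
    using opt d' unfolding phi_optimal_def phi_def by blast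
  moreover have "Phi_plus p (info_mat \<xi>) \<le> Phi_plus p (info_mat \<xi>opt)"
    using opt d\<xi> unfolding phi_optimal_def phi_def by blast
  moreover have "Phi_plus p (info_mat \<xi>) > 0" unfolding Meq by (rule Phi_pos[OF U dpos])
  ultimately have f1: "(1 + \<delta>) * Phi_plus p (info_mat \<xi>opt) \<le> Phi_plus p (info_mat \<xi>opt)"
    and f2: "Phi_plus p (info_mat \<xi>opt) > 0" by linarith+
  from f1 have "\<delta> * Phi_plus p (info_mat \<xi>opt) \<le> 0" by (simp add: algebra_simps)
  moreover have "\<delta> * Phi_plus p (info_mat \<xi>opt) > 0" using \<delta>pos f2 by simp
  ultimately show False by simp
qed


theorem mainTheorem5:
  fixes X :: "(real^'m) set" and p :: real
    and \<xi> \<xi>opt :: "(real^'m) measure" and xs :: "real^'m"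
  assumes "compact X"
    and "p > -1"
    and "is_design X \<xi>" and "invertible (info_mat \<xi>)"
    and "phi_optimal p X \<xi>opt"
    and "support_point \<xi>opt xs"
  shows "xs \<bullet> (mpow (info_mat \<xi>) (- (p + 1)) *v xs) \<ge> lambda_min (mpow (info_mat \<xi>) (- p))"
proof -
  obtain U d where U: "orthogonal_matrix U" and Meq: "info_mat \<xi> = odiag U d"
    using spectral[OF info_mat_sym] by blast
  have dnn: "d$j \<ge> 0" for j
    using odiag_eigval[OF U, where e=d and j=j] info_nnd[OF assms(3,1), of "column j U"] Meq by simp
  have dnz: "d$j \<noteq> 0" for j using invertible_eig_nz[OF U, of d j] assms(4) Meq by simp
  have dpos: "d$j > 0" for j using dnn[of j] dnz[of j] by linarith
  have key: "xs \<bullet> (odiag U (\<chi> j. 1 / d$j) *v xs) \<ge> 1"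
    by (rule key_support[OF assms(1,2,3,5,6) U Meq dpos])
  define e :: "real^'m" where "e = (\<chi> i. d$i powr (-p))"
  have mp1: "mpow (info_mat \<xi>) (- (p + 1)) = odiag U (\<chi> i. d$i powr (- (p + 1)))"
    by (rule mpow_odiag[OF U Meq])
  have mp2: "mpow (info_mat \<xi>) (- p) = odiag U e"
    unfolding e_def by (rule mpow_odiag[OF U Meq])
  define m where "m = Min (range (\<lambda>j. e$j))"
  have "m \<in> range (\<lambda>j. e$j)" unfolding m_def by (rule Min_in) auto
  then obtain k where k: "e$k = m" by auto
  have kmin: "e$k \<le> e$j" for j unfolding k m_def by (rule Min_le) auto
  have lam: "lambda_min (mpow (info_mat \<xi>) (- p)) \<le> e$k"
    unfolding mp2 by (rule lambda_min_le[OF U kmin])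
  define c where "c j = column j U \<bullet> xs" for j
  have ek_nn: "e$k \<ge> 0" unfolding e_def by simp
  have S1: "xs \<bullet> (odiag U (\<chi> j. 1 / d$j) *v xs) = (\<Sum>j\<in>UNIV. (1 / d$j) * c j * c j)"
    unfolding c_def by (simp add: odiag_quad)
  have "xs \<bullet> (mpow (info_mat \<xi>) (- (p + 1)) *v xs) = (\<Sum>j\<in>UNIV. d$j powr (- (p + 1)) * c j * c j)"
    unfolding mp1 c_def by (simp add: odiag_quad)
  also have "\<dots> = (\<Sum>j\<in>UNIV. e$j * ((1 / d$j) * c j * c j))"
  proof (rule sum.cong[OF refl])
    fix j
    have "d$j powr (- (p + 1)) = d$j powr (-p) * d$j powr (-1)"
    proof -
      have "- (p + 1) = -p + -1" by simp
      then show ?thesis by (simp only: powr_add)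
    qed
    also have "d$j powr (-1) = 1 / d$j" using dpos[of j] by (simp add: powr_minus divide_inverse)
    finally show "d$j powr (- (p + 1)) * c j * c j = e$j * ((1 / d$j) * c j * c j)"
      unfolding e_def by simp
  qed
  also have "\<dots> \<ge> (\<Sum>j\<in>UNIV. e$k * ((1 / d$j) * c j * c j))"
  proof (rule sum_mono)
    fix j
    have "(1 / d$j) * c j * c j \<ge> 0" using dpos[of j] by simp
    then show "e$k * ((1 / d$j) * c j * c j) \<le> e$j * ((1 / d$j) * c j * c j)"
      using kmin[of j] by (rule mult_right_mono[rotated])
  qed
  also have "(\<Sum>j\<in>UNIV. e$k * ((1 / d$j) * c j * c j)) = e$k * (xs \<bullet> (odiag U (\<chi> j. 1 / d$j) *v xs))"
    unfolding S1 by (simp add: sum_distrib_left)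
  also have "e$k * (xs \<bullet> (odiag U (\<chi> j. 1 / d$j) *v xs)) \<ge> e$k"
    using mult_left_mono[OF key ek_nn] by simp
  finally show ?thesis using lam by linarith
qed


end
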